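(* Let $U\subseteq\mathbb{R}^d$ be open and, for $i\in\{1,\dots,d\}$, let $\varphi_i\in C^2(U\times U;(0,\infty))$ with $\varphi_i(x)=\varphi_i(x_i,x_{i+d})$ (i.e. depending only on the coordinates $x_i,x_{i+d}$ of $x\in\mathbb{R}^{2d}$) be regularly non-separable, and all but at most one of them a.e. non-Gaussian. Set $\xi_i:=\partial_{x_i}\partial_{x_{i+d}}\log\varphi_i$. Then for any continuous $B:U\to\mathrm{GL}_d(\mathbb{R})$ such that $$\Lambda(u,v):=B(u)^\intercal\cdot\mathrm{diag}_{i}\big[\xi_i(u_i,v_i)\big]\cdot B(v),\qquad (u,v)\in U\times U,$$ has identically vanishing off-diagonal entries, we have $B(u)\in\mathrm{M}_d$ for every $u\in U$.
   Context: $\mathrm{M}_d$ denotes the real monomial $d\times d$ matrices (invertible diagonal times permutation). Each $\varphi_i$ is regarded as a function of $(x_i,x_{i+d})\in\pi_i(U)\times\pi_i(U)$ for the following notions. For $G\subseteq\mathbb{R}^2$ open, $\varsigma:G\to\mathbb{R}$ is pseudo-Gaussian if $\varsigma(x,y)=\varsigma_1(x)\varsigma_2(y)\exp(\pm\varsigma_3(x)\varsigma_3(y))$ on $G$ for some $\varsigma_1,\varsigma_2,\varsigma_3:\mathbb{R}\to\mathbb{R}$ and fixed sign, and separable if this holds with $\varsigma_3\equiv0$. It is strictly non-Gaussian (resp. strictly non-separable) if no restriction to a nonempty open subset of $G$ is pseudo-Gaussian (resp. separable), and a.e. non-Gaussian (resp. a.e. non-separable) if there is a closed Lebesgue-null set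 $\mathcal N\subset G$ with $\varsigma|_{G\setminus\mathcal N}$ strictly non-Gaussian (resp. strictly non-separable). A $C^2$ function $\varsigma:\tilde U\times\tilde U\to(0,\infty)$, $\tilde U\subseteq\mathbb{R}$ open, is regularly non-separable if it is a.e. non-separable and $(\partial_x\partial_y\log\varsigma)(x,x)\neq0$ for a.e. $x\in\tilde U$. *)

theory Defs
  imports "HOL-Analysis.Analysis"
begin

definition pseudo_gaussian_on :: "(real \<times> real) set \<Rightarrow> (real \<Rightarrow> real \<Rightarrow> real) \<Rightarrow> bool" where
  "pseudo_gaussian_on G \<sigma> \<longleftrightarrow>
     (\<exists>s1 s2 s3 :: real \<Rightarrow> real. \<exists>sg :: real. (sg = 1 \<or> sg = -1) \<and>
        (\<forall>(x,y)\<in>G. \<sigma> x y = s1 x * s2 y * exp (sg * (s3 x * s3 y))))"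

definition separable_on :: "(real \<times> real) set \<Rightarrow> (real \<Rightarrow> real \<Rightarrow> real) \<Rightarrow> bool" where
  "separable_on G \<sigma> \<longleftrightarrow> (\<exists>s1 s2 :: real \<Rightarrow> real. \<forall>(x,y)\<in>G. \<sigma> x y = s1 x * s2 y)"

definition strictly_non_gaussian_on :: "(real \<times> real) set \<Rightarrow> (real \<Rightarrow> real \<Rightarrow> real) \<Rightarrow> bool" where
  "strictly_non_gaussian_on G \<sigma> \<longleftrightarrow>
     (\<forall>W. open W \<and> W \<noteq> {} \<and> W \<subseteq> G \<longrightarrow> \<not> pseudo_gaussian_on W \<sigma>)"

definition strictly_non_separable_on :: "(real \<times> real) set \<Rightarrow> (real \<Rightarrow> real \<Rightarrow> real) \<Rightarrow> bool" where
  "strictly_non_separable_on G \<sigma> \<longleftrightarrow>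
     (\<forall>W. open W \<and> W \<noteq> {} \<and> W \<subseteq> G \<longrightarrow> \<not> separable_on W \<sigma>)"

definition ae_non_gaussian_on :: "(real \<times> real) set \<Rightarrow> (real \<Rightarrow> real \<Rightarrow> real) \<Rightarrow> bool" where
  "ae_non_gaussian_on G \<sigma> \<longleftrightarrow>
     (\<exists>N. N \<subseteq> G \<and> closedin (top_of_set G) N \<and> N \<in> null_sets lborel \<and>
          strictly_non_gaussian_on (G - N) \<sigma>)"

definition ae_non_separable_on :: "(real \<times> real) set \<Rightarrow> (real \<Rightarrow> real \<Rightarrow> real) \<Rightarrow> bool" where
  "ae_non_separable_on G \<sigma> \<longleftrightarrow>
     (\<exists>N. N \<subseteq> G \<and> closedin (top_of_set G) N \<and> N \<in> null_sets lborel \<and>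
          strictly_non_separable_on (G - N) \<sigma>)"

definition C2_on :: "(real \<times> real) set \<Rightarrow> (real \<Rightarrow> real \<Rightarrow> real) \<Rightarrow> bool" where
  "C2_on S f \<longleftrightarrow>
     (\<exists>fx fy fxx fxy fyx fyy :: real \<Rightarrow> real \<Rightarrow> real.
        (\<forall>(x,y)\<in>S.
           ((\<lambda>t. f t y) has_real_derivative fx x y) (at x) \<and>
           ((\<lambda>t. f x t) has_real_derivative fy x y) (at y) \<and>
           ((\<lambda>t. fx t y) has_real_derivative fxx x y) (at x) \<and>
           ((\<lambda>t. fx x t) has_real_derivative fxy x y) (at y) \<and>
           ((\<lambda>t. fy t y) has_real_derivative fyx x y) (at x) \<and>
           ((\<lambda>t. fy x t) has_real_derivative fyy x y) (at y)) \<and>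
        (\<forall>g \<in> {f, fx, fy, fxx, fxy, fyx, fyy}. continuous_on S (\<lambda>(x,y). g x y)))"

definition mixed_partial :: "(real \<Rightarrow> real \<Rightarrow> real) \<Rightarrow> real \<Rightarrow> real \<Rightarrow> real" where
  "mixed_partial g x y = deriv (\<lambda>s. deriv (\<lambda>t. g s t) y) x"

definition regularly_non_separable :: "real set \<Rightarrow> (real \<Rightarrow> real \<Rightarrow> real) \<Rightarrow> bool" where
  "regularly_non_separable V \<sigma> \<longleftrightarrow>
     open V \<and> C2_on (V \<times> V) \<sigma> \<and> (\<forall>x\<in>V. \<forall>y\<in>V. \<sigma> x y > 0) \<and>
     ae_non_separable_on (V \<times> V) \<sigma> \<and>
     (AE x in lborel. x \<in> V \<longrightarrow> mixed_partial (\<lambda>s t. ln (\<sigma> s t)) x x \<noteq> 0)"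

definition monomial_matrix :: "real^'n^'n \<Rightarrow> bool" where
  "monomial_matrix M \<longleftrightarrow>
     (\<exists>D P p. (\<forall>i j. i \<noteq> j \<longrightarrow> D$i$j = 0) \<and> (\<forall>i. D$i$i \<noteq> 0) \<and>
        p permutes (UNIV :: 'n set) \<and>
        P = (\<chi> i j. if j = p i then 1 else 0) \<and> M = D ** P)"

end

theory Submission
  imports Defs
begin

definition dg :: "('n::finite \<Rightarrow> real) \<Rightarrow> real^'n^'n" where
  "dg f = (\<chi> i j. if i = j then f i else 0)"

definition isdiag :: "real^'n^'n \<Rightarrow> bool" where
  "isdiag M \<longleftrightarrow> (\<forall>i j. i \<noteq> j \<longrightarrow> M$i$j = 0)"

lemma mul_dg_right: fixes A :: "real^'n^'m" shows "(A ** dg f)$i$j = A$i$j * f j"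
proof -
  have "(A ** dg f)$i$j = (\<Sum>k\<in>UNIV. A$i$k * (if k = j then f k else 0))"
    by (simp add: matrix_matrix_mult_def dg_def)
  also have "\<dots> = (\<Sum>k\<in>UNIV. if k = j then A$i$k * f k else 0)"
    by (rule sum.cong) auto
  finally show ?thesis by simp
qed

lemma mul_dg_left: fixes A :: "real^'m^'n" shows "(dg f ** A)$i$j = f i * A$i$j"
proof -
  have "(dg f ** A)$i$j = (\<Sum>k\<in>UNIV. (if i = k then f i else 0) * A$k$j)"
    by (simp add: matrix_matrix_mult_def dg_def)
  also have "\<dots> = (\<Sum>k\<in>UNIV. if i = k then f i * A$k$j else 0)"
    by (rule sum.cong) auto
  finally show ?thesis by simp
qed

lemma isdiag_mul_entry: fixes M :: "real^'n^'n" and N :: "real^'m^'n" shows "isdiag M \<Longrightarrow> (M ** N)$i$j = M$i$i * N$i$j"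
proof -
  assume M: "isdiag M"
  have "(M ** N)$i$j = (\<Sum>k\<in>UNIV. M$i$k * N$k$j)"
    unfolding matrix_matrix_mult_def by simp
  also have "\<dots> = (\<Sum>k\<in>UNIV. if i = k then M$i$k * N$k$j else 0)"
    using M unfolding isdiag_def by (intro sum.cong) auto
  finally show ?thesis by simp
qed

lemma isdiag_mul: fixes M N :: "real^'n^'n" shows "isdiag M \<Longrightarrow> isdiag N \<Longrightarrow> isdiag (M ** N)"
  by (simp add: isdiag_def isdiag_mul_entry)

lemma dg_mul: "dg f ** dg g = dg (\<lambda>i. f i * g i)"
  by (simp add: vec_eq_iff mul_dg_right) (simp add: dg_def)

lemma dg_one: "dg (\<lambda>i. 1) = mat 1"
  by (simp add: dg_def mat_def)

lemma isdiag_right_inv: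
  fixes M R :: "real^'n^'n"
  assumes "isdiag M" "M ** R = mat 1" shows "isdiag R"
  unfolding isdiag_def
proof (intro allI impI)
  fix i j :: 'n assume ij: "i \<noteq> j"
  have e: "\<And>j. M$i$i * R$i$j = (if i = j then 1 else 0)"
  proof -
    fix j
    have "M$i$i * R$i$j = (M ** R)$i$j" using isdiag_mul_entry[OF assms(1), of R i j] by simp
    then show "M$i$i * R$i$j = (if i = j then 1 else 0)" using assms(2) by (simp add: mat_def)
  qed
  from e[of i] have "M$i$i \<noteq> 0" by auto
  with e[of j] ij show "R$i$j = 0" by auto
qed

lemma dg_transpose: "transpose (dg f) = dg f"
  by (simp add: transpose_def dg_def vec_eq_iff)

lemma isdiag_transpose: "isdiag M \<Longrightarrow> isdiag (transpose M)"
  by (simp add: isdiag_def transpose_def)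

lemma lemH:
  fixes P P' P'i Q Qi :: "real^'n^'n"
  assumes "P' ** P'i = mat 1" "Q ** Qi = mat 1" "\<forall>i. g i \<noteq> 0"
    "isdiag (P ** dg f ** Q)" "isdiag (P' ** dg g ** Q)"
  shows "isdiag (P ** dg (\<lambda>i. f i / g i) ** P'i)"
proof -
  define R where "R = Qi ** dg (\<lambda>i. 1 / g i) ** P'i"
  have QQ: "\<And>X. Q ** (Qi ** X) = X" using assms(2)
    by (metis matrix_mul_assoc matrix_mul_lid)
  have g1: "dg g ** dg (\<lambda>i. 1 / g i) = mat 1"
    using assms(3) by (simp add: dg_mul flip: dg_one)
  have "P' ** dg g ** Q ** R = P' ** (dg g ** (Q ** (Qi ** (dg (\<lambda>i. 1 / g i) ** P'i))))"
    by (simp add: R_def matrix_mul_assoc)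
  also have "\<dots> = P' ** (dg g ** (dg (\<lambda>i. 1 / g i) ** P'i))"
    by (simp only: QQ)
  also have "\<dots> = P' ** ((dg g ** dg (\<lambda>i. 1 / g i)) ** P'i)"
    by (simp only: matrix_mul_assoc)
  also have "\<dots> = P' ** P'i"
    using g1 by (simp only: matrix_mul_lid)
  finally have "isdiag R" using assms(1,5) isdiag_right_inv by metis
  have "P ** dg f ** Q ** R = P ** (dg f ** (Q ** (Qi ** (dg (\<lambda>i. 1 / g i) ** P'i))))"
    by (simp add: R_def matrix_mul_assoc)
  also have "\<dots> = P ** (dg f ** (dg (\<lambda>i. 1 / g i) ** P'i))"
    by (simp only: QQ)
  also have "\<dots> = P ** ((dg f ** dg (\<lambda>i. 1 / g i)) ** P'i)"
    by (simp only: matrix_mul_assoc)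
  also have "\<dots> = P ** dg (\<lambda>i. f i / g i) ** P'i"
    by (simp add: dg_mul matrix_mul_assoc)
  finally show ?thesis using isdiag_mul[OF assms(4) \<open>isdiag R\<close>] by simp
qed

lemma lemC:
  fixes P Pi :: "real^'n^'n"
  assumes "Pi ** P = mat 1" "isdiag (P ** dg h ** Pi)" "P$i$m \<noteq> 0" "P$i$l \<noteq> 0"
  shows "h m = h l"
proof -
  define Z where "Z = P ** dg h ** Pi"
  have "Z ** P = P ** dg h ** (Pi ** P)" unfolding Z_def
    by (simp add: matrix_mul_assoc)
  then have ZP: "Z ** P = P ** dg h" using assms(1) by (simp add: matrix_mul_rid)
  have e: "Z$i$i * P$i$m' = P$i$m' * h m'" for m'
  proof -
    have "Z$i$i * P$i$m' = (Z ** P)$i$m'" using isdiag_mul_entry[of Z P] assms(2) Z_def by simp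
    also have "\<dots> = P$i$m' * h m'" using ZP mul_dg_right by metis
    finally show ?thesis .
  qed
  from e[of m] e[of l] assms(3,4) show ?thesis by (simp add: mult.commute)
qed

lemma col_nonzero:
  fixes M :: "real^'n^'n"
  assumes "invertible M"
  shows "\<exists>k. M$k$j \<noteq> 0"
proof (rule ccontr)
  assume "\<not> ?thesis"
  then have z: "\<forall>k. M$k$j = 0" by auto
  obtain N where N: "N ** M = mat 1" using assms invertible_left_inverse by blast
  have "M *v axis j 1 = 0" using z by (simp add: matrix_vector_mult_basis column_def vec_eq_iff)
  then have "N *v (M *v axis j (1::real)) = 0" by simp
  then have "axis j (1::real) = 0" by (simp add: matrix_vector_mul_assoc N)
  then show False by (simp add: axis_eq_0_iff)
qed

lemma monomial_from_cols:
  fixes M :: "real^'n^'n"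
  assumes inv: "invertible M"
    and cols: "\<And>j k l. k \<noteq> l \<Longrightarrow> M$k$j \<noteq> 0 \<Longrightarrow> M$l$j = 0"
  shows "monomial_matrix M"
proof -
  obtain r where r: "\<And>j. M$(r j)$j \<noteq> 0" using col_nonzero[OF inv] by metis
  have runiq: "\<And>k j. M$k$j \<noteq> 0 \<Longrightarrow> k = r j" using cols r by metis
  have "inj r"
  proof (rule injI)
    fix j j' assume eq: "r j = r j'"
    show "j = j'"
    proof (rule ccontr)
      assume jj: "j \<noteq> j'"
      define m where "m = r j"
      define x :: "real^'n" where "x = M$m$j' *\<^sub>R axis j 1 - M$m$j *\<^sub>R axis j' 1"
      have "M *v x = M$m$j' *\<^sub>R (M *v axis j 1) - M$m$j *\<^sub>R (M *v axis j' 1)"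
        unfolding x_def by (simp add: matrix_vector_mult_diff_distrib matrix_vector_mult_scaleR)
      also have "\<dots> = 0"
      proof (subst vec_eq_iff, intro allI)
        fix k
        show "(M$m$j' *\<^sub>R (M *v axis j 1) - M$m$j *\<^sub>R (M *v axis j' 1))$k = 0$k"
        proof (cases "k = m")
          case True then show ?thesis by (simp add: matrix_vector_mult_basis column_def)
        next
          case False
          then have "M$k$j = 0" "M$k$j' = 0" using runiq eq m_def by metis+
          then show ?thesis by (simp add: matrix_vector_mult_basis column_def)
        qed
      qed
      finally have Mx: "M *v x = 0" .
      obtain N where N: "N ** M = mat 1" using inv invertible_left_inverse by blast
      have "x = N *v (M *v x)" by (simp add: matrix_vector_mul_assoc N)
      then have "x = 0" using Mx by simp
      then have "x$j = 0" by simp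
      moreover have "x$j = M$m$j'" using jj by (simp add: x_def axis_def)
      moreover have "M$m$j' \<noteq> 0" using r[of j'] eq m_def by simp
      ultimately show False by simp
    qed
  qed
  then have "bij r" using finite_UNIV_inj_surj[of r] by (simp add: bij_def)
  define p where "p = inv r"
  have rp: "\<And>i. r (p i) = i" using \<open>bij r\<close> p_def by (simp add: bij_is_surj surj_f_inv_f)
  have pr: "\<And>j. p (r j) = j" using \<open>inj r\<close> p_def by simp
  have pperm: "p permutes (UNIV :: 'n set)"
    using bij_imp_bij_inv[OF \<open>bij r\<close>] p_def by (intro bij_imp_permutes) auto
  define D :: "real^'n^'n" where "D = (\<chi> i j. if i = j then M$i$(p i) else 0)"
  define P :: "real^'n^'n" where "P = (\<chi> i j. if j = p i then 1 else 0)"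
  have Dd: "isdiag D" by (simp add: isdiag_def D_def)
  have "M = D ** P"
  proof (subst vec_eq_iff, intro allI, subst vec_eq_iff, intro allI)
    fix i j
    have "(D ** P)$i$j = M$i$(p i) * (if j = p i then 1 else 0)"
      using isdiag_mul_entry[OF Dd, of P i j] by (simp add: D_def P_def)
    moreover have "M$i$j = 0" if "j \<noteq> p i"
    proof (rule ccontr)
      assume "M$i$j \<noteq> 0"
      then have "i = r j" by (rule runiq)
      then have "p i = j" using pr by simp
      then show False using that by simp
    qed
    ultimately show "M$i$j = (D ** P)$i$j" by auto
  qed
  moreover have "\<forall>i j. i \<noteq> j \<longrightarrow> D$i$j = 0" by (simp add: D_def)
  moreover have "\<forall>i. D$i$i \<noteq> 0"
  proof
    fix i
    have "M$(r (p i))$(p i) \<noteq> 0" by (rule r)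
    then show "D$i$i \<noteq> 0" by (simp add: D_def rp)
  qed
  ultimately show ?thesis unfolding monomial_matrix_def using pperm P_def by (intro exI[of _ D] exI[of _ P] exI[of _ p]) simp
qed

lemma C2_facts:
  fixes \<phi> :: "real \<Rightarrow> real \<Rightarrow> real"
  assumes V: "open V" and C2: "C2_on (V \<times> V) \<phi>" and pos: "\<forall>x\<in>V. \<forall>y\<in>V. \<phi> x y > 0"
  shows "\<exists>Ly. (\<forall>x\<in>V. \<forall>y\<in>V. ((\<lambda>t. ln (\<phi> x t)) has_real_derivative Ly x y) (at y) \<and>
            ((\<lambda>s. Ly s y) has_real_derivative mixed_partial (\<lambda>s t. ln (\<phi> s t)) x y) (at x))
         \<and> continuous_on (V \<times> V) (\<lambda>p. mixed_partial (\<lambda>s t. ln (\<phi> s t)) (fst p) (snd p))"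
proof -
  obtain fx fy fxx fxy fyx fyy :: "real \<Rightarrow> real \<Rightarrow> real" where
    D: "\<forall>(x,y)\<in>V \<times> V.
           ((\<lambda>t. \<phi> t y) has_real_derivative fx x y) (at x) \<and>
           ((\<lambda>t. \<phi> x t) has_real_derivative fy x y) (at y) \<and>
           ((\<lambda>t. fx t y) has_real_derivative fxx x y) (at x) \<and>
           ((\<lambda>t. fx x t) has_real_derivative fxy x y) (at y) \<and>
           ((\<lambda>t. fy t y) has_real_derivative fyx x y) (at x) \<and>
           ((\<lambda>t. fy x t) has_real_derivative fyy x y) (at y)"
    and C: "\<forall>g \<in> {\<phi>, fx, fy, fxx, fxy, fyx, fyy}. continuous_on (V \<times> V) (\<lambda>(x,y). g x y)"
    using C2 unfolding C2_on_def by blast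
  define Ly where "Ly x y = fy x y / \<phi> x y" for x y
  define Xi where "Xi x y = (fyx x y * \<phi> x y - fy x y * fx x y) / (\<phi> x y * \<phi> x y)" for x y
  have d1: "((\<lambda>t. ln (\<phi> x t)) has_real_derivative Ly x y) (at y)" if "x \<in> V" "y \<in> V" for x y
  proof -
    have "((\<lambda>t. \<phi> x t) has_real_derivative fy x y) (at y)" using D that by auto
    from DERIV_chain2[OF DERIV_ln_divide[OF pos[rule_format, OF that]] this]
    show ?thesis by (simp add: Ly_def)
  qed
  have d2: "((\<lambda>s. Ly s y) has_real_derivative Xi x y) (at x)" if "x \<in> V" "y \<in> V" for x y
  proof -
    have a: "((\<lambda>t. fy t y) has_real_derivative fyx x y) (at x)" using D that by auto
    have b: "((\<lambda>t. \<phi> t y) has_real_derivative fx x y) (at x)" using D that by auto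
    have c: "\<phi> x y \<noteq> 0" using pos that by force
    from DERIV_divide[OF a b c] show ?thesis by (simp add: Ly_def Xi_def)
  qed
  have mp: "mixed_partial (\<lambda>s t. ln (\<phi> s t)) x y = Xi x y" if "x \<in> V" "y \<in> V" for x y
  proof -
    have eq: "\<And>s. s \<in> V \<Longrightarrow> Ly s y = deriv (\<lambda>t. ln (\<phi> s t)) y"
      using d1 that by (metis DERIV_imp_deriv)
    have "((\<lambda>s. deriv (\<lambda>t. ln (\<phi> s t)) y) has_real_derivative Xi x y) (at x)"
      by (rule has_field_derivative_transform_within_open[OF d2[OF that] V that(1)]) (use eq in auto)
    then show ?thesis unfolding mixed_partial_def by (rule DERIV_imp_deriv)
  qed
  have cc: "continuous_on (V \<times> V) (\<lambda>p. g (fst p) (snd p))" if "g \<in> {\<phi>, fx, fy, fyx}" for g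
    using C that by (auto simp: case_prod_beta')
  have cXi: "continuous_on (V \<times> V) (\<lambda>p. Xi (fst p) (snd p))"
    unfolding Xi_def
    using cc[of \<phi>] cc[of fx] cc[of fy] cc[of fyx] pos
    by (intro continuous_intros) (auto, metis less_irrefl)
  have "continuous_on (V \<times> V) (\<lambda>p. mixed_partial (\<lambda>s t. ln (\<phi> s t)) (fst p) (snd p))"
    using cXi by (rule continuous_on_cong[THEN iffD1, rotated 2]) (auto simp: mp)
  moreover have "\<forall>x\<in>V. \<forall>y\<in>V. ((\<lambda>t. ln (\<phi> x t)) has_real_derivative Ly x y) (at y) \<and>
            ((\<lambda>s. Ly s y) has_real_derivative mixed_partial (\<lambda>s t. ln (\<phi> s t)) x y) (at x)"
    using d1 d2 mp by auto
  ultimately show ?thesis by blast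
qed

lemma zero_deriv_const:
  fixes h :: "real \<Rightarrow> real"
  assumes "convex J" "\<And>s. s \<in> J \<Longrightarrow> (h has_real_derivative 0) (at s)" "c \<in> J" "x \<in> J"
  shows "h x = h c"
proof -
  obtain C where "\<forall>s\<in>J. h s = C"
    using has_field_derivative_zero_constant[OF assms(1)] assms(2)
    by (metis has_field_derivative_at_within)
  then show ?thesis using assms(3,4) by simp
qed

lemma pg:
  fixes \<phi> :: "real \<Rightarrow> real \<Rightarrow> real"
  assumes V: "open V" and C2: "C2_on (V \<times> V) \<phi>" and pos: "\<forall>x\<in>V. \<forall>y\<in>V. \<phi> x y > 0"
    and J: "J \<subseteq> V" "convex J" "c \<in> J"
    and K: "mixed_partial (\<lambda>s t. ln (\<phi> s t)) c c \<noteq> 0"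
    and sym: "\<forall>y\<in>J. mixed_partial (\<lambda>s t. ln (\<phi> s t)) c y = mixed_partial (\<lambda>s t. ln (\<phi> s t)) y c"
    and r1: "\<forall>x\<in>J. \<forall>y\<in>J. mixed_partial (\<lambda>s t. ln (\<phi> s t)) x y * mixed_partial (\<lambda>s t. ln (\<phi> s t)) c c
              = mixed_partial (\<lambda>s t. ln (\<phi> s t)) c y * mixed_partial (\<lambda>s t. ln (\<phi> s t)) x c"
  shows "pseudo_gaussian_on (J \<times> J) \<phi>"
proof -
  define \<xi> where "\<xi> = mixed_partial (\<lambda>s t. ln (\<phi> s t))"
  define L where "L x y = ln (\<phi> x y)" for x y
  obtain Ly where Ly: "\<forall>x\<in>V. \<forall>y\<in>V. ((\<lambda>t. L x t) has_real_derivative Ly x y) (at y) \<and>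
            ((\<lambda>s. Ly s y) has_real_derivative \<xi> x y) (at x)"
    using C2_facts[OF V C2 pos] unfolding \<xi>_def L_def by blast
  define K where "K = \<xi> c c"
  have K0: "K \<noteq> 0" using K by (simp add: K_def \<xi>_def)
  define G where "G x = Ly x c - Ly c c" for x
  have cV: "c \<in> V" using J by auto
  have dG: "(G has_real_derivative \<xi> t c) (at t)" if "t \<in> J" for t
  proof -
    have "((\<lambda>s. Ly s c) has_real_derivative \<xi> t c) (at t)" using Ly J that cV by auto
    then show ?thesis unfolding G_def by (auto intro!: derivative_eq_intros)
  qed
  have step1: "Ly x y - Ly c y = G x * \<xi> y c / K" if xy: "x \<in> J" "y \<in> J" for x y
  proof -
    define h where "h s = Ly s y - Ly c y - G s * \<xi> y c / K" for s
    have "(h has_real_derivative 0) (at s)" if s: "s \<in> J" for s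
    proof -
      have a: "((\<lambda>s. Ly s y) has_real_derivative \<xi> s y) (at s)" using Ly J s xy by auto
      have "(h has_real_derivative (\<xi> s y - \<xi> s c * \<xi> y c / K)) (at s)"
        unfolding h_def using K0 by (auto intro!: derivative_eq_intros a dG s)
      moreover have "\<xi> s y * K = \<xi> y c * \<xi> s c"
        using r1 sym s xy unfolding K_def \<xi>_def by auto
      then have "\<xi> s y - \<xi> s c * \<xi> y c / K = 0" using K0 by (simp add: field_simps)
      ultimately show ?thesis by simp
    qed
    then have "h x = h c" using zero_deriv_const[OF J(2) _ J(3) xy(1)] by blast
    moreover have "G c = 0" by (simp add: G_def)
    ultimately show ?thesis by (simp add: h_def)
  qed
  have step2: "L x y = L x c + L c y - L c c + G x * G y / K" if xy: "x \<in> J" "y \<in> J" for x y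
  proof -
    define k where "k t = L x t - L c t - G x * G t / K" for t
    have "(k has_real_derivative 0) (at t)" if t: "t \<in> J" for t
    proof -
      have a: "((\<lambda>t. L x t) has_real_derivative Ly x t) (at t)" using Ly J t xy by auto
      have b: "((\<lambda>t. L c t) has_real_derivative Ly c t) (at t)" using Ly J t cV by auto
      have "(k has_real_derivative (Ly x t - Ly c t - G x * \<xi> t c / K)) (at t)"
        unfolding k_def using K0 by (auto intro!: derivative_eq_intros a b dG t)
      moreover have "Ly x t - Ly c t - G x * \<xi> t c / K = 0" using step1[OF xy(1) t] by simp
      ultimately show ?thesis by simp
    qed
    then have "k y = k c" using zero_deriv_const[OF J(2) _ J(3) xy(2)] by blast
    moreover have "G c = 0" by (simp add: G_def)
    ultimately show ?thesis by (simp add: k_def)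
  qed
  define sg :: real where "sg = sgn K"
  define s3 where "s3 x = G x / sqrt \<bar>K\<bar>" for x
  have sg: "sg = 1 \<or> sg = -1" using K0 by (auto simp: sg_def sgn_if)
  have gg: "G x * G y / K = sg * (s3 x * s3 y)" for x y
  proof -
    have sq: "sqrt \<bar>K\<bar> * sqrt \<bar>K\<bar> = \<bar>K\<bar>" by simp
    have "s3 x * s3 y = (G x * G y) / (sqrt \<bar>K\<bar> * sqrt \<bar>K\<bar>)"
      by (simp add: s3_def)
    also have "\<dots> = (G x * G y) / \<bar>K\<bar>" by (simp only: sq)
    finally have e: "s3 x * s3 y = (G x * G y) / \<bar>K\<bar>" .
    show ?thesis
    proof (cases "K > 0")
      case True
      then show ?thesis by (simp add: e sg_def)
    next
      case False
      then have "K < 0" using K0 by simp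
      then show ?thesis by (simp add: e sg_def)
    qed
  qed
  have "\<forall>(x,y)\<in>J \<times> J. \<phi> x y = \<phi> x c * (\<phi> c y / \<phi> c c) * exp (sg * (s3 x * s3 y))"
  proof (clarify)
    fix x y assume xy: "x \<in> J" "y \<in> J"
    have p: "\<phi> x y > 0" "\<phi> x c > 0" "\<phi> c y > 0" "\<phi> c c > 0" using pos J xy cV by auto
    have "\<phi> x y = exp (L x y)" using p by (simp add: L_def)
    also have "L x y = L x c + L c y - L c c + sg * (s3 x * s3 y)" using step2[OF xy] gg[of x y] by simp
    also have "exp (L x c + L c y - L c c + sg * (s3 x * s3 y))
        = exp (L x c) * (exp (L c y) / exp (L c c)) * exp (sg * (s3 x * s3 y))"
      by (simp only: exp_add exp_diff times_divide_eq_right)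
    also have "\<dots> = \<phi> x c * (\<phi> c y / \<phi> c c) * exp (sg * (s3 x * s3 y))"
      using p by (simp only: L_def exp_ln)
    finally show "\<phi> x y = \<phi> x c * (\<phi> c y / \<phi> c c) * exp (sg * (s3 x * s3 y))" .
  qed
  then show ?thesis unfolding pseudo_gaussian_on_def using sg
    by (intro exI[of _ "\<lambda>x. \<phi> x c"] exI[of _ "\<lambda>y. \<phi> c y / \<phi> c c"] exI[of _ s3] exI[of _ sg]) simp
qed

lemma AE_interval_exists:
  fixes a b :: real
  assumes "AE x in lborel. P x" "a < b"
  shows "\<exists>x. a < x \<and> x < b \<and> P x"
proof (rule ccontr)
  assume "\<not> ?thesis"
  then have sub: "{a<..<b} \<subseteq> {x \<in> space lborel. \<not> P x}" by auto
  obtain N where N: "{x \<in> space lborel. \<not> P x} \<subseteq> N" "N \<in> null_sets lborel"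
    by (rule AE_E[OF assms(1)]) blast
  have "emeasure lborel {a<..<b} \<le> emeasure lborel N"
    using sub N by (intro emeasure_mono) auto
  also have "\<dots> = 0" using N by auto
  finally have "emeasure lborel {a<..<b} = 0" by simp
  then show False using assms(2) by simp
qed

lemma null_no_open:
  fixes S N :: "(real \<times> real) set"
  assumes "open S" "S \<noteq> {}" "S \<subseteq> N" "N \<in> null_sets lborel"
  shows False
proof -
  have "N \<in> null_sets lebesgue" using assms(4) by (rule null_sets_completionI)
  then have "negligible N" by (simp add: negligible_iff_null_sets)
  then have "negligible S" using assms(3) by (rule negligible_subset)
  then show False using open_not_negligible[OF assms(1,2)] by simp
qed

lemma inball:
  fixes u0 p :: "real^'n"
  assumes "r > 0" "\<forall>m. \<bar>p$m - u0$m\<bar> < r / real CARD('n)"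
  shows "p \<in> ball u0 r"
proof -
  have "dist u0 p = norm (p - u0)" by (simp add: dist_norm norm_minus_commute)
  also have "\<dots> \<le> (\<Sum>m\<in>UNIV. \<bar>(p - u0)$m\<bar>)" by (rule norm_le_l1_cart)
  also have "\<dots> < (\<Sum>m\<in>(UNIV::'n set). r / real CARD('n))"
    using assms(2) by (intro sum_strict_mono) auto
  also have "\<dots> = r" by simp
  finally show ?thesis by (simp add: mem_ball)
qed

lemma minv:
  fixes A :: "real^'n^'n"
  assumes "invertible A"
  shows "A ** matrix_inv A = mat 1" "matrix_inv A ** A = mat 1"
proof -
  have "\<exists>A'. A ** A' = mat 1 \<and> A' ** A = mat 1" using assms by (simp add: invertible_def)
  then have "A ** matrix_inv A = mat 1 \<and> matrix_inv A ** A = mat 1"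
    unfolding matrix_inv_def by (rule someI_ex)
  then show "A ** matrix_inv A = mat 1" "matrix_inv A ** A = mat 1" by auto
qed

lemma convJ: "convex {a<..<b::real}" by simp

lemma pg_mono: "pseudo_gaussian_on A f \<Longrightarrow> W \<subseteq> A \<Longrightarrow> pseudo_gaussian_on W f"
  unfolding pseudo_gaussian_on_def by blast

lemma core:
  fixes U :: "(real^'d) set" and \<phi> :: "'d \<Rightarrow> real \<Rightarrow> real \<Rightarrow> real"
    and B :: "real^'d \<Rightarrow> real^'d^'d"
  assumes U: "open U"
    and rns: "\<And>i. regularly_non_separable ((\<lambda>x. x$i) ` U) (\<phi> i)"
    and Bc: "continuous_on U B"
    and Binv: "\<And>u. u \<in> U \<Longrightarrow> invertible (B u)"
    and hyp: "\<And>u v i j. u \<in> U \<Longrightarrow> v \<in> U \<Longrightarrow> i \<noteq> j \<Longrightarrow>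
           (transpose (B u) **
             (\<chi> k l. if k = l then mixed_partial (\<lambda>s t. ln (\<phi> k s t)) (u$k) (v$k) else 0)
             ** B v) $ i $ j = 0"
    and u0: "u0 \<in> U" and kl: "k \<noteq> l" and nzk: "B u0 $ k $ i \<noteq> 0" and nzl: "B u0 $ l $ i \<noteq> 0"
    and ng: "ae_non_gaussian_on (((\<lambda>x. x$k) ` U) \<times> ((\<lambda>x. x$k) ` U)) (\<phi> k)"
  shows False
proof -
  define V where "V m = (\<lambda>x. x$m) ` U" for m
  define \<xi> where "\<xi> m s t = mixed_partial (\<lambda>s t. ln (\<phi> m s t)) s t" for m s t
  have hdiag: "isdiag (transpose (B u) ** dg (\<lambda>m. \<xi> m (u$m) (v$m)) ** B v)" if "u \<in> U" "v \<in> U" for u v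
    using hyp[OF that] unfolding isdiag_def dg_def \<xi>_def by blast
  have hdiagT: "isdiag (transpose (B u) ** dg (\<lambda>m. \<xi> m (v$m) (u$m)) ** B v)" if "u \<in> U" "v \<in> U" for u v
  proof -
    have "isdiag (transpose (B v) ** dg (\<lambda>m. \<xi> m (v$m) (u$m)) ** B u)" using hdiag that by blast
    then have "isdiag (transpose (transpose (B v) ** dg (\<lambda>m. \<xi> m (v$m) (u$m)) ** B u))"
      by (rule isdiag_transpose)
    moreover have "transpose (transpose (B v) ** dg (\<lambda>m. \<xi> m (v$m) (u$m)) ** B u)
        = transpose (B u) ** dg (\<lambda>m. \<xi> m (v$m) (u$m)) ** B v"
      by (simp add: matrix_transpose_mul dg_transpose matrix_mul_assoc)
    ultimately show ?thesis by simp
  qed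
  have c1: "continuous_on U (\<lambda>u. B u $ k $ i)" "continuous_on U (\<lambda>u. B u $ l $ i)"
    using Bc by (auto intro!: continuous_intros)
  define W where "W = (U \<inter> (\<lambda>u. B u $ k $ i) -` (-{0})) \<inter> (U \<inter> (\<lambda>u. B u $ l $ i) -` (-{0}))"
  have "open W" unfolding W_def
    by (intro open_Int continuous_open_preimage c1 U open_Compl) auto
  moreover have "u0 \<in> W" using u0 nzk nzl by (simp add: W_def)
  ultimately obtain r where r: "r > 0" "ball u0 r \<subseteq> W" using open_contains_ball by blast
  define \<delta> where "\<delta> = r / real CARD('d)"
  have \<delta>: "\<delta> > 0" using r by (simp add: \<delta>_def)
  have ptW: "p \<in> U \<and> B p $ k $ i \<noteq> 0 \<and> B p $ l $ i \<noteq> 0" if "\<forall>m. \<bar>p$m - u0$m\<bar> < \<delta>" for p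
  proof -
    have "p \<in> ball u0 r" using inball[OF r(1)] that by (simp add: \<delta>_def)
    then have "p \<in> W" using r by auto
    then show ?thesis by (simp add: W_def)
  qed
  have "\<exists>x. \<bar>x - u0$m\<bar> < \<delta> \<and> \<xi> m x x \<noteq> 0" for m
  proof -
    have "AE x in lborel. x \<in> V m \<longrightarrow> \<xi> m x x \<noteq> 0"
      using rns[of m] unfolding regularly_non_separable_def V_def \<xi>_def by blast
    then obtain x where x: "u0$m - \<delta> < x" "x < u0$m + \<delta>" "x \<in> V m \<longrightarrow> \<xi> m x x \<noteq> 0"
      using AE_interval_exists[of _ "u0$m - \<delta>" "u0$m + \<delta>"] \<delta> by auto
    define p where "p = (\<chi> j. if j = m then x else u0$j)"
    have "\<forall>j. \<bar>p$j - u0$j\<bar> < \<delta>" using x \<delta> by (simp add: p_def abs_less_iff)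
    then have "p \<in> U" using ptW by blast
    then have "x \<in> V m" unfolding V_def by (rule image_eqI[rotated]) (simp add: p_def)
    then show ?thesis using x by (intro exI[of _ x]) (auto simp: abs_less_iff)
  qed
  then obtain a where a: "\<And>m. \<bar>a m - u0$m\<bar> < \<delta>" "\<And>m. \<xi> m (a m) (a m) \<noteq> 0" by metis
  define pt where "pt t = (\<chi> j. if j = k then t else a j)" for t
  have ptin: "pt t \<in> U \<and> B (pt t) $ k $ i \<noteq> 0 \<and> B (pt t) $ l $ i \<noteq> 0" if "\<bar>t - u0$k\<bar> < \<delta>" for t
    using ptW[of "pt t"] that a(1) by (simp add: pt_def)
  have ptV: "t \<in> V k" if "\<bar>t - u0$k\<bar> < \<delta>" for t
  proof -
    have "pt t \<in> U" using ptin that by blast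
    then show ?thesis unfolding V_def by (rule image_eqI[rotated]) (simp add: pt_def)
  qed
  define c where "c = a k"
  have cV: "c \<in> V k" using ptV a(1) c_def by blast
  have cc0: "\<xi> k c c \<noteq> 0" using a(2) c_def by simp
  have Vo: "open (V k)" and C2: "C2_on (V k \<times> V k) (\<phi> k)" and pos: "\<forall>x\<in>V k. \<forall>y\<in>V k. \<phi> k x y > 0"
    using rns[of k] unfolding regularly_non_separable_def V_def by auto
  have cont: "continuous_on (V k \<times> V k) (\<lambda>p. \<xi> k (fst p) (snd p))"
    using C2_facts[OF Vo C2 pos] unfolding \<xi>_def by blast
  define Oo where "Oo = (V k \<times> V k) \<inter> (\<lambda>p. \<xi> k (fst p) (snd p)) -` (-{0})"
  have "open Oo" unfolding Oo_def
    by (intro continuous_open_preimage cont open_Times Vo open_Compl) auto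
  moreover have "(c, c) \<in> Oo" using cV cc0 by (simp add: Oo_def)
  ultimately obtain e where e: "e > 0" "ball (c, c) e \<subseteq> Oo" using open_contains_ball by blast
  define \<epsilon> where "\<epsilon> = min (e/2) (\<delta> - \<bar>c - u0$k\<bar>)"
  have \<epsilon>: "\<epsilon> > 0" using e a(1) c_def by (simp add: \<epsilon>_def)
  define J where "J = {c - \<epsilon><..<c + \<epsilon>}"
  have cJ: "c \<in> J" using \<epsilon> by (simp add: J_def)
  have J\<delta>: "\<bar>x - u0$k\<bar> < \<delta>" if "x \<in> J" for x
    using that by (auto simp: J_def \<epsilon>_def abs_less_iff)
  have JV: "J \<subseteq> V k" using J\<delta> ptV by blast
  have Jnz: "\<xi> k x y \<noteq> 0" if "x \<in> J" "y \<in> J" for x y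
  proof -
    have "dist (c, c) (x, y) = sqrt ((dist c x)\<^sup>2 + (dist c y)\<^sup>2)" by (simp add: dist_Pair_Pair)
    also have "\<dots> \<le> \<bar>dist c x\<bar> + \<bar>dist c y\<bar>" by (rule sqrt_sum_squares_le_sum_abs)
    also have "\<dots> < e"
    proof -
      have "\<epsilon> \<le> e/2" unfolding \<epsilon>_def by (rule min.cobounded1)
      moreover have "\<bar>c - x\<bar> < \<epsilon>" "\<bar>c - y\<bar> < \<epsilon>" using that by (auto simp: J_def abs_less_iff)
      ultimately show ?thesis by (simp add: dist_real_def)
    qed
    finally have "(x, y) \<in> Oo" using e by (auto simp: mem_ball)
    then show ?thesis by (simp add: Oo_def)
  qed
  define D where "D s t = (\<lambda>m. \<xi> m ((pt s)$m) ((pt t)$m))" for s t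
  have Dk: "D s t k = \<xi> k s t" for s t by (simp add: D_def pt_def)
  have Dm: "D s t m = \<xi> m (a m) (a m)" if "m \<noteq> k" for s t m using that by (simp add: D_def pt_def)
  have Dnz: "\<forall>m. D s t m \<noteq> 0" if "s \<in> J" "t \<in> J" for s t
    using Dk Dm Jnz[OF that] a(2) by metis
  have inU: "pt s \<in> U" if "s \<in> J" for s using ptin J\<delta> that by blast
  have diag: "isdiag (transpose (B (pt s)) ** dg (D s t) ** B (pt t))" if "s \<in> J" "t \<in> J" for s t
    using hdiag[OF inU[OF that(1)] inU[OF that(2)]] by (simp add: D_def)
  have diagT: "isdiag (transpose (B (pt s)) ** dg (D t s) ** B (pt t))" if "s \<in> J" "t \<in> J" for s t
    using hdiagT[OF inU[OF that(1)] inU[OF that(2)]] by (simp add: D_def)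
  define T where "T s = transpose (B (pt s))" for s
  have Tinv: "invertible (T s)" if "s \<in> J" for s
    using Binv[OF inU[OF that]] by (simp add: T_def transpose_invertible)
  have Binv': "invertible (B (pt s))" if "s \<in> J" for s using Binv[OF inU[OF that]] .
  have Tnz: "T s $ i $ k \<noteq> 0" "T s $ i $ l \<noteq> 0" if "s \<in> J" for s
    using ptin[OF J\<delta>[OF that]] by (simp_all add: T_def transpose_def)
  have sym: "\<xi> k c y = \<xi> k y c" if y: "y \<in> J" for y
  proof -
    have "isdiag (T c ** dg (\<lambda>m. D y c m / D c y m) ** matrix_inv (T c))"
      by (rule lemH[OF minv(1)[OF Tinv[OF cJ]] minv(1)[OF Binv'[OF y]] Dnz[OF cJ y]])
         (use diagT[OF cJ y] diag[OF cJ y] in \<open>simp_all add: T_def\<close>)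
    from lemC[OF minv(2)[OF Tinv[OF cJ]] this Tnz[OF cJ]]
    have "D y c k / D c y k = D y c l / D c y l" .
    moreover have "D y c l / D c y l = 1" using Dm[OF kl[symmetric]] a(2)[of l] by simp
    ultimately have "\<xi> k y c / \<xi> k c y = 1" by (simp only: Dk)
    then show ?thesis using Jnz[OF cJ y] by (simp add: field_simps)
  qed
  have r1: "\<xi> k x y * \<xi> k c c = \<xi> k c y * \<xi> k x c" if x: "x \<in> J" and y: "y \<in> J" for x y
  proof -
    have Z1: "isdiag (T x ** dg (\<lambda>m. D x y m / D c y m) ** matrix_inv (T c))"
      by (rule lemH[OF minv(1)[OF Tinv[OF cJ]] minv(1)[OF Binv'[OF y]] Dnz[OF cJ y]])
         (use diag[OF x y] diag[OF cJ y] in \<open>simp_all add: T_def\<close>)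
    have Z2: "isdiag (T x ** dg (\<lambda>m. D x c m / D c c m) ** matrix_inv (T c))"
      by (rule lemH[OF minv(1)[OF Tinv[OF cJ]] minv(1)[OF Binv'[OF cJ]] Dnz[OF cJ cJ]])
         (use diag[OF x cJ] diag[OF cJ cJ] in \<open>simp_all add: T_def\<close>)
    have gnz: "\<forall>m. D x c m / D c c m \<noteq> 0" using Dnz[OF x cJ] Dnz[OF cJ cJ] by simp
    have Z3: "isdiag (T x ** dg (\<lambda>m. (D x y m / D c y m) / (D x c m / D c c m)) ** matrix_inv (T x))"
      by (rule lemH[OF minv(1)[OF Tinv[OF x]] minv(2)[OF Tinv[OF cJ]] gnz Z1 Z2])
    from lemC[OF minv(2)[OF Tinv[OF x]] Z3 Tnz[OF x]]
    have "(D x y k / D c y k) / (D x c k / D c c k) = (D x y l / D c y l) / (D x c l / D c c l)" .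
    moreover have "(D x y l / D c y l) / (D x c l / D c c l) = 1"
      using Dm[OF kl[symmetric]] a(2)[of l] by simp
    ultimately have "(\<xi> k x y / \<xi> k c y) / (\<xi> k x c / \<xi> k c c) = 1"
      by (simp only: Dk)
    then have "\<xi> k c y * \<xi> k x c = \<xi> k x y * \<xi> k c c"
      using Jnz[OF x cJ] Jnz[OF cJ cJ] by (simp add: divide_eq_1_iff)
    then show ?thesis by (rule HOL.sym)
  qed
  have cvJ: "convex J" unfolding J_def by (rule convex_real_interval(8))
  have cc0': "mixed_partial (\<lambda>s t. ln (\<phi> k s t)) c c \<noteq> 0" using cc0 by (simp add: \<xi>_def)
  have sym': "\<forall>y\<in>J. mixed_partial (\<lambda>s t. ln (\<phi> k s t)) c y = mixed_partial (\<lambda>s t. ln (\<phi> k s t)) y c"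
    using sym unfolding \<xi>_def by blast
  have r1': "\<forall>x\<in>J. \<forall>y\<in>J. mixed_partial (\<lambda>s t. ln (\<phi> k s t)) x y * mixed_partial (\<lambda>s t. ln (\<phi> k s t)) c c
              = mixed_partial (\<lambda>s t. ln (\<phi> k s t)) c y * mixed_partial (\<lambda>s t. ln (\<phi> k s t)) x c"
    using r1 unfolding \<xi>_def by blast
  have PG: "pseudo_gaussian_on (J \<times> J) (\<phi> k)"
    by (rule pg[OF Vo C2 pos JV cvJ cJ cc0' sym' r1'])
  obtain N where N: "N \<subseteq> V k \<times> V k" "closedin (top_of_set (V k \<times> V k)) N"
      "N \<in> null_sets lborel" "strictly_non_gaussian_on ((V k \<times> V k) - N) (\<phi> k)"
    using ng unfolding ae_non_gaussian_on_def V_def by blast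
  obtain Tc where Tc: "closed Tc" "N = (V k \<times> V k) \<inter> Tc" using N(2) closedin_closed by blast
  define W' where "W' = (J \<times> J) \<inter> - Tc"
  have JJ: "J \<times> J \<subseteq> V k \<times> V k" using JV by auto
  have oW: "open W'" unfolding W'_def J_def using Tc(1) by (intro open_Int open_Times open_Compl) auto
  have sW: "W' \<subseteq> (V k \<times> V k) - N" using JJ Tc(2) by (auto simp: W'_def)
  have neW: "W' \<noteq> {}"
  proof
    assume "W' = {}"
    then have "J \<times> J \<subseteq> N" using JJ Tc(2) by (auto simp: W'_def)
    moreover have "open (J \<times> J)" unfolding J_def by (intro open_Times) auto
    moreover have "J \<times> J \<noteq> {}" using cJ by auto
    ultimately show False using null_no_open[of "J \<times> J" N] N(3) by simp
  qed
  have "\<not> pseudo_gaussian_on W' (\<phi> k)" using N(4) oW sW neW unfolding strictly_non_gaussian_on_def by blast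
  moreover have "pseudo_gaussian_on W' (\<phi> k)" using pg_mono[OF PG] JJ by (auto simp: W'_def)
  ultimately show False by simp
qed

theorem lemma4p6:
  fixes U :: "(real^'d) set"
    and \<phi> :: "'d \<Rightarrow> real \<Rightarrow> real \<Rightarrow> real"
    and B :: "real^'d \<Rightarrow> real^'d^'d"
  assumes "open U"
    and "\<And>i. regularly_non_separable ((\<lambda>x. x$i) ` U) (\<phi> i)"
    and "\<exists>j. \<forall>i. i \<noteq> j \<longrightarrow>
           ae_non_gaussian_on (((\<lambda>x. x$i) ` U) \<times> ((\<lambda>x. x$i) ` U)) (\<phi> i)"
    and "continuous_on U B"
    and "\<And>u. u \<in> U \<Longrightarrow> invertible (B u)"
    and "\<And>u v i j. u \<in> U \<Longrightarrow> v \<in> U \<Longrightarrow> i \<noteq> j \<Longrightarrow>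
           (transpose (B u) **
             (\<chi> k l. if k = l then mixed_partial (\<lambda>s t. ln (\<phi> k s t)) (u$k) (v$k) else 0)
             ** B v) $ i $ j = 0"
  shows "\<forall>u\<in>U. monomial_matrix (B u)"
proof
  fix u0 assume u0: "u0 \<in> U"
  obtain j0 where j0: "\<forall>i. i \<noteq> j0 \<longrightarrow>
           ae_non_gaussian_on (((\<lambda>x. x$i) ` U) \<times> ((\<lambda>x. x$i) ` U)) (\<phi> i)"
    using assms(3) by blast
  show "monomial_matrix (B u0)"
  proof (rule monomial_from_cols[OF assms(5)[OF u0]])
    fix j k l assume kl: "k \<noteq> l" and nz: "B u0 $ k $ j \<noteq> 0"
    show "B u0 $ l $ j = 0"
    proof (rule ccontr)
      assume nzl: "B u0 $ l $ j \<noteq> 0"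
      show False
      proof (cases "k = j0")
        case False
        then show False using core[OF assms(1,2,4,5,6) u0 kl nz nzl] j0 by blast
      next
        case True
        then have "l \<noteq> j0" using kl by simp
        then show False using core[OF assms(1,2,4,5,6) u0 kl[symmetric] nzl nz] j0 by blast
      qed
    qed
  qed
qed

end
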